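(* Let $V$ be a finite set and let $\Pi=\{\mathcal{P}_1,\mathcal{P}_2,\mathcal{P}_3\}$ be a homogeneous $3$-scheme on $V$. Then $(V,\mathcal{P}_2\cup\{1\})$ is an association scheme, where $1=\{(v,v)\mid v\in V\}$ is the identity relation.
   Context: For a finite set $V$ and $s\geq1$, let $V^{(s)}$ be the set of $s$-tuples of pairwise distinct elements of $V$. For $s>1$ and $1\leq i\leq s$, $\pi^s_i:V^{(s)}\to V^{(s-1)}$ deletes the $i$-th coordinate. $\mathrm{Symm}_s$ acts on $V^{(s)}$ by $(v_1,\dots,v_s)^\tau=(v_{1^\tau},\dots,v_{s^\tau})$. An $m$-collection on $V$ is a set $\Pi=\{\mathcal{P}_1,\dots,\mathcal{P}_m\}$ where $\mathcal{P}_s$ is a partition of $V^{(s)}$; its classes are called colors. It is an $m$-scheme if for every $1<s\leq m$: (compatibility) whenever $\bar u,\bar v$ lie in the same color of $\mathcal{P}_s$, for every $i$ the tuples $\pi^s_i(\bar u),\pi^s_i(\bar v)$ lie in the same color of $\mathcal{P}_{s-1}$; (regularity) whenever $\bar u,\bar v$ lie in the same color of $\mathcal{P}_{s-1}$, for every $1\leq i\leq s$ and every $P\in\mathcal{P}_s$, $\#\{\bar u'\in P\mid \pi^s_i(\bar u')=\bar u\}=\#\{\bar v'\in P\mid\pi^s_i(\bar v')=\bar v\}$; (invariance) for every $P\in\mathcal{P}_s$ and $\tau\in\mathrm{Symm}_s$, $P^\tau:=\{\bar v^\tau\mid \bar v\in P\}\in\mathcal{P}_s$. It is homogeneous if $|\mathcal{P}_1|=1$.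 An association scheme is a pair $(X,G)$ with $X$ finite and $G$ a partition of $X\times X$ containing the identity relation $1$, closed under $g\mapsto g^*:=\{(y,x)\mid(x,y)\in g\}$, and such that for all $f,g,h\in G$ the number $\#\{\gamma\in X\mid(\alpha,\gamma)\in f,(\gamma,\beta)\in g\}$ is the same for all $(\alpha,\beta)\in h$. *)

theory Defs
  imports "HOL-Library.Disjoint_Sets" "HOL-Combinatorics.Permutations"
begin

text \<open>s-tuples of pairwise distinct elements of V, represented as distinct lists of length s.
  Coordinates are indexed from 0.\<close>
definition tuples :: "'a set \<Rightarrow> nat \<Rightarrow> 'a list set" where
  "tuples V s = {xs. length xs = s \<and> distinct xs \<and> set xs \<subseteq> V}"

definition proj :: "nat \<Rightarrow> 'a list \<Rightarrow> 'a list" where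
  "proj i xs = take i xs @ drop (Suc i) xs"

definition tuple_act :: "'a list \<Rightarrow> (nat \<Rightarrow> nat) \<Rightarrow> 'a list" where
  "tuple_act xs \<tau> = map (\<lambda>j. xs ! \<tau> j) [0..<length xs]"

definition m_collection :: "'a set \<Rightarrow> nat \<Rightarrow> (nat \<Rightarrow> 'a list set set) \<Rightarrow> bool" where
  "m_collection V m P \<longleftrightarrow> (\<forall>s. 1 \<le> s \<and> s \<le> m \<longrightarrow> partition_on (tuples V s) (P s))"

definition same_color :: "'a list set set \<Rightarrow> 'a list \<Rightarrow> 'a list \<Rightarrow> bool" where
  "same_color Q u v \<longleftrightarrow> (\<exists>C\<in>Q. u \<in> C \<and> v \<in> C)"

definition m_scheme :: "'a set \<Rightarrow> nat \<Rightarrow> (nat \<Rightarrow> 'a list set set) \<Rightarrow> bool" where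
  "m_scheme V m P \<longleftrightarrow> m_collection V m P \<and>
     (\<forall>s. 1 < s \<and> s \<le> m \<longrightarrow>
        \<comment> \<open>compatibility\<close>
        (\<forall>u v i. same_color (P s) u v \<and> i < s \<longrightarrow>
            same_color (P (s - 1)) (proj i u) (proj i v)) \<and>
        \<comment> \<open>regularity\<close>
        (\<forall>u v i C. same_color (P (s - 1)) u v \<and> i < s \<and> C \<in> P s \<longrightarrow>
            card {u' \<in> C. proj i u' = u} = card {v' \<in> C. proj i v' = v}) \<and>
        \<comment> \<open>invariance\<close>
        (\<forall>C \<tau>. C \<in> P s \<and> \<tau> permutes {..<s} \<longrightarrow>
            (\<lambda>xs. tuple_act xs \<tau>) ` C \<in> P s))"

definition homogeneous :: "(nat \<Rightarrow> 'a list set set) \<Rightarrow> bool" where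
  "homogeneous P \<longleftrightarrow> card (P 1) = 1"

definition association_scheme :: "'a set \<Rightarrow> ('a \<times> 'a) set set \<Rightarrow> bool" where
  "association_scheme X G \<longleftrightarrow> finite X \<and> partition_on (X \<times> X) G \<and> Id_on X \<in> G \<and>
     (\<forall>g\<in>G. g\<inverse> \<in> G) \<and>
     (\<forall>f\<in>G. \<forall>g\<in>G. \<forall>h\<in>G. \<forall>a b a' b'. (a, b) \<in> h \<and> (a', b') \<in> h \<longrightarrow>
        card {c\<in>X. (a, c) \<in> f \<and> (c, b) \<in> g} = card {c\<in>X. (a', c) \<in> f \<and> (c, b') \<in> g})"

definition as_relation :: "'a list set \<Rightarrow> ('a \<times> 'a) set" where
  "as_relation C = (\<lambda>xs. (xs ! 0, xs ! 1)) ` C"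

end

theory Submission
  imports Defs
begin

lemma tuples2: "xs \<in> tuples V 2 \<longleftrightarrow> (\<exists>x y. xs = [x,y] \<and> x \<noteq> y \<and> x \<in> V \<and> y \<in> V)"
proof
  assume "xs \<in> tuples V 2"
  then have "length xs = 2" "distinct xs" "set xs \<subseteq> V" by (auto simp: tuples_def)
  then show "\<exists>x y. xs = [x,y] \<and> x \<noteq> y \<and> x \<in> V \<and> y \<in> V"
    by (auto simp: numeral_eq_Suc length_Suc_conv)
qed (auto simp: tuples_def)

lemma tuples3: "xs \<in> tuples V 3 \<longleftrightarrow> (\<exists>x y z. xs = [x,y,z] \<and> distinct [x,y,z] \<and> x \<in> V \<and> y \<in> V \<and> z \<in> V)"
proof
  assume "xs \<in> tuples V 3"
  then have "length xs = 3" "distinct xs" "set xs \<subseteq> V" by (auto simp: tuples_def)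
  then show "\<exists>x y z. xs = [x,y,z] \<and> distinct [x,y,z] \<and> x \<in> V \<and> y \<in> V \<and> z \<in> V"
    by (simp add: numeral_eq_Suc length_Suc_conv, elim exE conjE, simp)
qed (auto simp: tuples_def)

lemma tuples1: "[a] \<in> tuples V 1 \<longleftrightarrow> a \<in> V"
  by (auto simp: tuples_def)

lemma part_unique: "partition_on A Q \<Longrightarrow> C \<in> Q \<Longrightarrow> C' \<in> Q \<Longrightarrow> x \<in> C \<Longrightarrow> x \<in> C' \<Longrightarrow> C = C'"
  unfolding partition_on_def disjoint_def by blast

lemma part_sub: "partition_on A Q \<Longrightarrow> C \<in> Q \<Longrightarrow> C \<subseteq> A"
  unfolding partition_on_def by blast

lemma part_ex: "partition_on A Q \<Longrightarrow> x \<in> A \<Longrightarrow> \<exists>C\<in>Q. x \<in> C"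
  unfolding partition_on_def by blast

lemma part_ne: "partition_on A Q \<Longrightarrow> C \<in> Q \<Longrightarrow> C \<noteq> {}"
  unfolding partition_on_def by blast

lemma rel_iff: "C \<subseteq> tuples V 2 \<Longrightarrow> (x,y) \<in> as_relation C \<longleftrightarrow> [x,y] \<in> C"
proof
  assume C: "C \<subseteq> tuples V 2" and "(x,y) \<in> as_relation C"
  then obtain xs where "xs \<in> C" "(xs!0, xs!1) = (x,y)" by (auto simp: as_relation_def)
  moreover have "xs \<in> tuples V 2" using C \<open>xs \<in> C\<close> by blast
  moreover then obtain p q where "xs = [p,q]" unfolding tuples2 by blast
  ultimately show "[x,y] \<in> C" by simp
qed (force simp: as_relation_def)

lemma proj_facts: "proj 1 [a,c,b] = [a,b]" "proj 2 [a,c,b] = [a,c]" "proj 0 [a,c,b] = [c,b]"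
  "proj 1 [a,c] = [a]"
  by (simp_all add: proj_def numeral_eq_Suc)

lemma proj_suc[simp]: "proj (Suc 0) [a,c,b] = [a,b]" "proj (Suc 0) [a,c] = [a]"
  by (simp_all add: proj_def)

lemma tact2: "tuple_act [x,y] (Transposition.transpose 0 1) = [y,x]"
  by (simp add: tuple_act_def upt_rec)

lemma finite_tuples: "finite V \<Longrightarrow> finite (tuples V s)"
proof -
  assume "finite V"
  have "tuples V s \<subseteq> {xs. set xs \<subseteq> V \<and> length xs = s}" by (auto simp: tuples_def)
  moreover have "finite {xs. set xs \<subseteq> V \<and> length xs = s}"
    using finite_lists_length_eq[OF \<open>finite V\<close>] by simp
  ultimately show ?thesis by (rule finite_subset)
qed



theorem lemma2p3:
  fixes V :: "'a set" and P :: "nat \<Rightarrow> 'a list set set"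
  assumes "finite V"
    and "m_scheme V 3 P"
    and "homogeneous P"
  shows "association_scheme V (as_relation ` P 2 \<union> {Id_on V})"
proof -
  have p1: "partition_on (tuples V 1) (P 1)" and p2: "partition_on (tuples V 2) (P 2)"
    and p3: "partition_on (tuples V 3) (P 3)"
    using assms(2) by (auto simp: m_scheme_def m_collection_def)
  have S2: "(\<forall>u v i. same_color (P 2) u v \<and> i < 2 \<longrightarrow>
            same_color (P 1) (proj i u) (proj i v)) \<and>
        (\<forall>u v i C. same_color (P 1) u v \<and> i < 2 \<and> C \<in> P 2 \<longrightarrow>
            card {u' \<in> C. proj i u' = u} = card {v' \<in> C. proj i v' = v}) \<and>
        (\<forall>C \<tau>. C \<in> P 2 \<and> \<tau> permutes {..<2} \<longrightarrow>
            (\<lambda>xs. tuple_act xs \<tau>) ` C \<in> P 2)"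
    using spec[OF conjunct2[OF assms(2)[unfolded m_scheme_def]], of 2] by simp
  have S3: "(\<forall>u v i. same_color (P 3) u v \<and> i < 3 \<longrightarrow>
            same_color (P 2) (proj i u) (proj i v)) \<and>
        (\<forall>u v i C. same_color (P 2) u v \<and> i < 3 \<and> C \<in> P 3 \<longrightarrow>
            card {u' \<in> C. proj i u' = u} = card {v' \<in> C. proj i v' = v})"
    using spec[OF conjunct2[OF assms(2)[unfolded m_scheme_def]], of 3] by simp
  have reg2: "card {u' \<in> C. proj 1 u' = u} = card {v' \<in> C. proj 1 v' = v}"
    if "same_color (P 1) u v" "C \<in> P 2" for u v C
    using S2 that by auto
  have inv2: "(\<lambda>xs. tuple_act xs (Transposition.transpose 0 1)) ` C \<in> P 2" if "C \<in> P 2" for C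
  proof -
    have "Transposition.transpose (0::nat) 1 permutes {..<2}"
      by (rule permutes_swap_id) auto
    then show ?thesis using S2 that by blast
  qed
  have comp3: "same_color (P 2) (proj i u) (proj i v)" if "same_color (P 3) u v" "i < 3" for u v i
    using S3 that by blast
  have reg3: "card {u' \<in> C. proj 1 u' = u} = card {v' \<in> C. proj 1 v' = v}"
    if "same_color (P 2) u v" "C \<in> P 3" for u v C
    using S3 that by auto
  have Vne: "V \<noteq> {}"
  proof
    assume "V = {}"
    then have "tuples V 1 = {}" by (auto simp: tuples_def)
    then have "P 1 = {}" using p1 partition_on_empty by metis
    then show False using assms(3) by (simp add: homogeneous_def)
  qed
  have same1: "same_color (P 1) [x] [y]" if "x \<in> V" "y \<in> V" for x y
  proof -
    obtain X where X: "P 1 = {X}" using assms(3) by (auto simp: homogeneous_def card_1_singleton_iff)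
    then have "X = tuples V 1" using p1 by (auto simp: partition_on_def)
    then show ?thesis using X that by (auto simp: same_color_def tuples_def)
  qed
  have relC: "(x,y) \<in> as_relation C \<longleftrightarrow> [x,y] \<in> C" if "C \<in> P 2" for C x y
    using rel_iff[OF part_sub[OF p2 that]] .
  have C2: "[x,y] \<in> C \<Longrightarrow> C \<in> P 2 \<Longrightarrow> x \<noteq> y \<and> x \<in> V \<and> y \<in> V" for x y C
    using part_sub[OF p2] by (fastforce simp: tuples_def)
  define G where "G = as_relation ` P 2 \<union> {Id_on V}"
  have Gsub: "g \<subseteq> V \<times> V" if gG: "g \<in> G" for g
  proof
    fix p assume "p \<in> g"
    obtain x y where p: "p = (x,y)" by fastforce
    show "p \<in> V \<times> V"
    proof (cases "g = Id_on V")
      case True then show ?thesis using \<open>p \<in> g\<close> by auto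
    next
      case False
      then obtain C where C: "C \<in> P 2" "g = as_relation C" using gG G_def by blast
      then show ?thesis using \<open>p \<in> g\<close> p relC C2 by auto
    qed
  qed
  have Guniq: "g = g'" if gG: "g \<in> G" and gG': "g' \<in> G" and xy: "(x,y) \<in> g" "(x,y) \<in> g'" for g g' x y
  proof (cases "x = y")
    case True
    have "g = Id_on V" if gG: "g \<in> G" and xx: "(x,x) \<in> g" for g
    proof (rule ccontr)
      assume "g \<noteq> Id_on V"
      then obtain C where C: "C \<in> P 2" "g = as_relation C" using gG G_def by blast
      then have "[x,x] \<in> C" using xx relC by auto
      then show False using C2 C by blast
    qed
    then show ?thesis using True \<open>g \<in> G\<close> \<open>g' \<in> G\<close> \<open>(x,y) \<in> g\<close> \<open>(x,y) \<in> g'\<close> by metis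
  next
    case False
    then have "g \<noteq> Id_on V" "g' \<noteq> Id_on V" using xy by auto
    then obtain C C' where C: "C \<in> P 2" "g = as_relation C" "C' \<in> P 2" "g' = as_relation C'"
      using gG gG' G_def by blast
    then have "[x,y] \<in> C" "[x,y] \<in> C'" using xy relC by auto
    then show ?thesis using part_unique[OF p2] C by metis
  qed
  have part: "partition_on (V \<times> V) G"
    unfolding partition_on_def
  proof (intro conjI)
    show "\<Union> G = V \<times> V"
    proof
      show "\<Union> G \<subseteq> V \<times> V" using Gsub by blast
      show "V \<times> V \<subseteq> \<Union> G"
      proof
        fix p assume "p \<in> V \<times> V"
        then obtain x y where xy: "p = (x,y)" "x \<in> V" "y \<in> V" by blast
        show "p \<in> \<Union> G"
        proof (cases "x = y")
          case True then show ?thesis using xy G_def by auto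
        next
          case False
          then have "[x,y] \<in> tuples V 2" using xy by (simp add: tuples_def)
          then obtain C where "C \<in> P 2" "[x,y] \<in> C" using part_ex[OF p2] by blast
          then show ?thesis using xy relC G_def by blast
        qed
      qed
    qed
    show "disjoint G"
    proof (rule disjointI)
      fix a b assume ab: "a \<in> G" "b \<in> G" "a \<noteq> b"
      show "a \<inter> b = {}"
      proof (rule ccontr)
        assume "a \<inter> b \<noteq> {}"
        then obtain x y where "(x,y) \<in> a" "(x,y) \<in> b" by auto
        then show False using Guniq[OF ab(1,2)] ab(3) by blast
      qed
    qed
    show "{} \<notin> G"
    proof
      assume "{} \<in> G"
      then show False
      proof (cases "{} = Id_on V")
        case True then show ?thesis using Vne by auto
      next
        case False
        then obtain C where C: "C \<in> P 2" "{} = as_relation C" using \<open>{} \<in> G\<close> G_def by auto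
        then show False using part_ne[OF p2] by (auto simp: as_relation_def)
      qed
    qed
  qed
  have swapF: "[y,x] \<in> (\<lambda>xs. tuple_act xs (Transposition.transpose 0 1)) ` C \<longleftrightarrow> [x,y] \<in> C"
    if CP: "C \<in> P 2" for C x y
  proof
    assume "[x,y] \<in> C"
    then show "[y,x] \<in> (\<lambda>xs. tuple_act xs (Transposition.transpose 0 1)) ` C"
      by (rule image_eqI[where x="[x,y]" and f="\<lambda>xs. tuple_act xs (Transposition.transpose 0 1)", OF tact2[of x y, symmetric]])
  next
    assume "[y,x] \<in> (\<lambda>xs. tuple_act xs (Transposition.transpose 0 1)) ` C"
    then obtain t where t: "t \<in> C" "tuple_act t (Transposition.transpose 0 1) = [y,x]" by auto
    have "t \<in> tuples V 2" using t(1) part_sub[OF p2 CP] by blast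
    then obtain p q where pq: "t = [p,q]" unfolding tuples2 by blast
    then have "[q,p] = [y,x]" using t(2) tact2 by metis
    then show "[x,y] \<in> C" using t(1) pq by simp
  qed
  have conv: "g\<inverse> \<in> G" if gG: "g \<in> G" for g
  proof (cases "g = Id_on V")
    case True then show ?thesis using G_def by auto
  next
    case False
    then obtain C where C: "C \<in> P 2" "g = as_relation C" using gG G_def by blast
    define C' where "C' = (\<lambda>xs. tuple_act xs (Transposition.transpose 0 1)) ` C"
    have C': "C' \<in> P 2" using inv2 C C'_def by auto
    have "as_relation C' = g\<inverse>"
    proof (rule set_eqI)
      fix p :: "'a \<times> 'a"
      obtain x y where p: "p = (x,y)" by fastforce
      show "p \<in> as_relation C' \<longleftrightarrow> p \<in> g\<inverse>"
        using relC[OF C'] relC[OF C(1)] swapF[OF C(1)] C p C'_def by auto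
    qed
    then show ?thesis using C' G_def by auto
  qed
  have num: "card {c\<in>V. (a, c) \<in> f \<and> (c, b) \<in> g} = card {c\<in>V. (a', c) \<in> f \<and> (c, b') \<in> g}"
    if f: "f\<in>G" and g: "g\<in>G" and h: "h\<in>G" and ab: "(a,b)\<in>h" and ab': "(a',b')\<in>h"
    for f g h a b a' b'
  proof -
    show ?thesis
    proof (cases "f = Id_on V")
      case fI: True
      have E: "{c\<in>V. (x, c) \<in> f \<and> (c, y) \<in> g} = (if g = h then {x} else {})"
        if xy: "(x,y) \<in> h" for x y
      proof -
        have xV: "x \<in> V" using Gsub[OF h] xy by blast
        have "(x,y) \<in> g \<longleftrightarrow> g = h" using Guniq[OF g h _ xy] xy by blast
        then show ?thesis using fI xV by auto
      qed
      show ?thesis using E[OF ab] E[OF ab'] by simp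
    next
      case fnI: False
      show ?thesis
      proof (cases "g = Id_on V")
        case gI: True
        have E: "{c\<in>V. (x, c) \<in> f \<and> (c, y) \<in> g} = (if f = h then {y} else {})"
          if xy: "(x,y) \<in> h" for x y
        proof -
          have yV: "y \<in> V" using Gsub[OF h] xy by blast
          have "(x,y) \<in> f \<longleftrightarrow> f = h" using Guniq[OF f h _ xy] xy by blast
          then show ?thesis using gI yV by auto
        qed
        show ?thesis using E[OF ab] E[OF ab'] by simp
      next
        case gnI: False
        obtain F where F: "F \<in> P 2" "f = as_relation F" using f fnI G_def by blast
        obtain H2 where H2: "H2 \<in> P 2" "g = as_relation H2" using g gnI G_def by blast
        have Sset: "{c\<in>V. (x, c) \<in> f \<and> (c, y) \<in> g} = {c\<in>V. [x,c] \<in> F \<and> [c,y] \<in> H2}" for x y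
          using relC[OF F(1)] relC[OF H2(1)] F(2) H2(2) by auto
        show ?thesis
        proof (cases "h = Id_on V")
          case hI: True
          then have eq: "a = b" "a' = b'" "a \<in> V" "a' \<in> V" using ab ab' by auto
          define F' where "F' = (\<lambda>xs. tuple_act xs (Transposition.transpose 0 1)) ` F"
          have F'P: "F' \<in> P 2" using inv2 F F'_def by auto
          have K: "card {c\<in>V. [x,c] \<in> F \<and> [c,x] \<in> H2}
                 = (if F' = H2 then card {u'\<in>F. proj 1 u' = [x]} else 0)" if xV: "x \<in> V" for x
          proof (cases "F' = H2")
            case True
            have "{c\<in>V. [x,c] \<in> F \<and> [c,x] \<in> H2} = {c\<in>V. [x,c]\<in>F}"
              using True swapF[OF F(1)] F'_def by auto
            also have "card \<dots> = card {u'\<in>F. proj 1 u' = [x]}"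
            proof (rule bij_betw_same_card[of "\<lambda>c. [x,c]"])
              show "bij_betw (\<lambda>c. [x,c]) {c\<in>V. [x,c]\<in>F} {u'\<in>F. proj 1 u' = [x]}"
                unfolding bij_betw_def
              proof
                show "inj_on (\<lambda>c. [x,c]) {c\<in>V. [x,c]\<in>F}" by (rule inj_onI) simp
                show "(\<lambda>c. [x,c]) ` {c\<in>V. [x,c]\<in>F} = {u'\<in>F. proj 1 u' = [x]}"
                proof
                  show "(\<lambda>c. [x,c]) ` {c\<in>V. [x,c]\<in>F} \<subseteq> {u'\<in>F. proj 1 u' = [x]}"
                    using proj_facts(4) by auto
                  show "{u'\<in>F. proj 1 u' = [x]} \<subseteq> (\<lambda>c. [x,c]) ` {c\<in>V. [x,c]\<in>F}"
                  proof
                    fix u assume u: "u \<in> {u'\<in>F. proj 1 u' = [x]}"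
                    then have "u \<in> tuples V 2" using part_sub[OF p2 F(1)] by blast
                    then obtain p q where pq: "u = [p,q]" "q \<in> V" unfolding tuples2 by blast
                    then have "p = x" using u proj_facts(4)[of p q] by simp
                    then show "u \<in> (\<lambda>c. [x,c]) ` {c\<in>V. [x,c]\<in>F}" using pq u by auto
                  qed
                qed
              qed
            qed
            finally show ?thesis using True by simp
          next
            case False
            have E0: "{c\<in>V. [x,c] \<in> F \<and> [c,x] \<in> H2} = {}"
            proof (rule ccontr)
              assume "{c\<in>V. [x,c] \<in> F \<and> [c,x] \<in> H2} \<noteq> {}"
              then obtain c where c: "[x,c]\<in>F" "[c,x]\<in>H2" by auto
              then have "[c,x] \<in> F'" using swapF[OF F(1)] F'_def by auto
              then have "F' = H2" using part_unique[OF p2 F'P H2(1)] c(2) by blast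
              then show False using False by simp
            qed
            show ?thesis using False by (simp only: E0 card.empty if_False)
          qed
          have "card {u'\<in>F. proj 1 u' = [a]} = card {u'\<in>F. proj 1 u' = [a']}"
            using reg2[OF same1[OF eq(3,4)] F(1)] .
          then show ?thesis using K[OF eq(3)] K[OF eq(4)] Sset eq(1,2) by simp
        next
          case hnI: False
          obtain H where H: "H \<in> P 2" "h = as_relation H" using h hnI G_def by blast
          define T where "T = {t\<in>tuples V 3. proj 2 t \<in> F \<and> proj 0 t \<in> H2}"
          define Q where "Q = {D\<in>P 3. D \<subseteq> T}"
          have TQ: "T = \<Union>Q"
          proof
            show "\<Union>Q \<subseteq> T" unfolding Q_def by blast
            show "T \<subseteq> \<Union>Q"
            proof
              fix t assume tT: "t \<in> T"
              then have "t \<in> tuples V 3" unfolding T_def by blast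
              then obtain D where D: "D \<in> P 3" "t \<in> D" using part_ex[OF p3] by blast
              have "D \<subseteq> T"
              proof
                fix t' assume t': "t' \<in> D"
                have t'V: "t' \<in> tuples V 3" using part_sub[OF p3 D(1)] t' by blast
                have sc: "same_color (P 3) t t'" using D t' by (auto simp: same_color_def)
                obtain C1 where C1: "C1 \<in> P 2" "proj 2 t \<in> C1" "proj 2 t' \<in> C1"
                  using comp3[OF sc, of 2] by (auto simp: same_color_def)
                obtain C0 where C0: "C0 \<in> P 2" "proj 0 t \<in> C0" "proj 0 t' \<in> C0"
                  using comp3[OF sc, of 0] by (auto simp: same_color_def)
                have "proj 2 t \<in> F" "proj 0 t \<in> H2" using tT unfolding T_def by auto
                then have "C1 = F" "C0 = H2"
                  using part_unique[OF p2 C1(1) F(1) C1(2)] part_unique[OF p2 C0(1) H2(1) C0(2)] by auto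
                then show "t' \<in> T" using t'V C1 C0 unfolding T_def by auto
              qed
              then show "t \<in> \<Union>Q" using D unfolding Q_def by blast
            qed
          qed
          have finP3: "finite (P 3)"
          proof (rule finite_subset)
            show "P 3 \<subseteq> Pow (tuples V 3)" using part_sub[OF p3] by blast
            show "finite (Pow (tuples V 3))" using finite_tuples[OF assms(1)] by simp
          qed
          have finQ: "finite Q" unfolding Q_def using finP3 by simp
          have K: "card {c\<in>V. [x,c] \<in> F \<and> [c,y] \<in> H2} = (\<Sum>D\<in>Q. card {t\<in>D. proj 1 t = [x,y]})"
            if xyH: "[x,y] \<in> H" for x y
          proof -
            have xy: "x \<noteq> y" "x\<in>V" "y\<in>V" using C2[OF xyH H(1)] by auto
            have "card {c\<in>V. [x,c] \<in> F \<and> [c,y] \<in> H2} = card {t\<in>T. proj 1 t = [x,y]}"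
            proof (rule bij_betw_same_card[of "\<lambda>c. [x,c,y]"])
              show "bij_betw (\<lambda>c. [x,c,y]) {c\<in>V. [x,c] \<in> F \<and> [c,y] \<in> H2} {t\<in>T. proj 1 t = [x,y]}"
                unfolding bij_betw_def
              proof
                show "inj_on (\<lambda>c. [x,c,y]) {c\<in>V. [x,c] \<in> F \<and> [c,y] \<in> H2}" by (rule inj_onI) simp
                show "(\<lambda>c. [x,c,y]) ` {c\<in>V. [x,c] \<in> F \<and> [c,y] \<in> H2} = {t\<in>T. proj 1 t = [x,y]}"
                proof
                  show "(\<lambda>c. [x,c,y]) ` {c\<in>V. [x,c] \<in> F \<and> [c,y] \<in> H2} \<subseteq> {t\<in>T. proj 1 t = [x,y]}"
                  proof
                    fix u assume "u \<in> (\<lambda>c. [x,c,y]) ` {c\<in>V. [x,c] \<in> F \<and> [c,y] \<in> H2}"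
                    then obtain c where c: "u = [x,c,y]" "c \<in> V" "[x,c] \<in> F" "[c,y] \<in> H2" by blast
                    have "x \<noteq> c" "c \<noteq> y" using C2[OF c(3) F(1)] C2[OF c(4) H2(1)] by auto
                    then have "u \<in> tuples V 3" using c xy by (auto simp: tuples_def)
                    then show "u \<in> {t\<in>T. proj 1 t = [x,y]}" using c unfolding T_def by (auto simp: proj_facts)
                  qed
                  show "{t\<in>T. proj 1 t = [x,y]} \<subseteq> (\<lambda>c. [x,c,y]) ` {c\<in>V. [x,c] \<in> F \<and> [c,y] \<in> H2}"
                  proof
                    fix u assume u: "u \<in> {t\<in>T. proj 1 t = [x,y]}"
                    then have "u \<in> tuples V 3" unfolding T_def by blast
                    then obtain p q r where pqr: "u = [p,q,r]" "q \<in> V" unfolding tuples3 by blast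
                    then have "p = x" "r = y" using u proj_facts(1)[of p q r] by auto
                    then have "u = [x,q,y]" "[x,q] \<in> F" "[q,y] \<in> H2"
                      using pqr u proj_facts(2,3)[of x q y] unfolding T_def by auto
                    then show "u \<in> (\<lambda>c. [x,c,y]) ` {c\<in>V. [x,c] \<in> F \<and> [c,y] \<in> H2}"
                      using pqr(2) by blast
                  qed
                qed
              qed
            qed
            also have "{t\<in>T. proj 1 t = [x,y]} = (\<Union>D\<in>Q. {t\<in>D. proj 1 t = [x,y]})"
              using TQ by blast
            also have "card \<dots> = (\<Sum>D\<in>Q. card {t\<in>D. proj 1 t = [x,y]})"
            proof (rule card_UN_disjoint[OF finQ])
              show "\<forall>D\<in>Q. finite {t\<in>D. proj 1 t = [x,y]}"
              proof
                fix D assume "D \<in> Q"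
                then have "D \<subseteq> tuples V 3" using part_sub[OF p3] unfolding Q_def by blast
                then show "finite {t\<in>D. proj 1 t = [x,y]}"
                  using finite_tuples[OF assms(1)] finite_subset by (metis (no_types, lifting) mem_Collect_eq subsetI subset_iff)
              qed
              show "\<forall>D\<in>Q. \<forall>D'\<in>Q. D \<noteq> D' \<longrightarrow> {t\<in>D. proj 1 t = [x,y]} \<inter> {t\<in>D'. proj 1 t = [x,y]} = {}"
                using part_unique[OF p3] unfolding Q_def by blast
            qed
            finally show ?thesis .
          qed
          have "[a,b]\<in>H" "[a',b']\<in>H" using ab ab' H relC by auto
          then have sc: "same_color (P 2) [a,b] [a',b']" using H(1) by (auto simp: same_color_def)
          have "(\<Sum>D\<in>Q. card {t\<in>D. proj 1 t = [a,b]}) = (\<Sum>D\<in>Q. card {t\<in>D. proj 1 t = [a',b']})"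
          proof (rule sum.cong)
            fix D assume "D \<in> Q"
            then have "D \<in> P 3" unfolding Q_def by blast
            then show "card {t\<in>D. proj 1 t = [a,b]} = card {t\<in>D. proj 1 t = [a',b']}"
              by (rule reg3[OF sc])
          qed simp
          then show ?thesis using K[OF \<open>[a,b]\<in>H\<close>] K[OF \<open>[a',b']\<in>H\<close>] Sset by simp
        qed
      qed
    qed
  qed
  have N: "\<forall>f\<in>G. \<forall>g\<in>G. \<forall>h\<in>G. \<forall>a b a' b'. (a, b) \<in> h \<and> (a', b') \<in> h \<longrightarrow>
        card {c\<in>V. (a, c) \<in> f \<and> (c, b) \<in> g} = card {c\<in>V. (a', c) \<in> f \<and> (c, b') \<in> g}"
    by (intro ballI allI impI, elim conjE, rule num) assumption+
  have I: "Id_on V \<in> G" unfolding G_def by simp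
  have C: "\<forall>g\<in>G. g\<inverse> \<in> G" using conv by blast
  show ?thesis unfolding association_scheme_def G_def[symmetric]
    apply (intro conjI)
        apply (rule assms(1))
       apply (rule part)
      apply (rule I)
     apply (rule C)
    apply (rule N)
    done
qed

end
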